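(* Let $\mathfrak{C}=(U,M,I,N,J)$ be a formal decision context. Then the set of necessary II-decision rules of $\mathfrak{C}$ is $$\overline{\mathfrak{R}}_{II}(\mathfrak{C})=\{(\cup[O]_{S_1},(\cup[O]_{S_1})^{\square_M})\rightarrow(O^{\lozenge_N\square_N},O^{\lozenge_N})\mid O\in\mathrm{Ext}L_O(\mathfrak{C}_M)\}.$$
   Context: Formal context $(U,M,I)$: $U$ and $M$ are finite nonempty sets and $I\subseteq U\times M$. For $O\subseteq U$ and $C\subseteq M$ define: - $O^{\lozenge}=\{a\in M\mid\exists x\in O\,((x,a)\in I)\}$ and $C^{\square}=\{x\in U\mid \forall a\in M\,((x,a)\in I\Rightarrow a\in C)\}$; - $O^{\square}=\{a\in M\mid \forall x\in U\,((x,a)\in I\Rightarrow x\in O)\}$ and $C^{\lozenge}=\{x\in U\mid \exists a\in C\,((x,a)\in I)\}$. An object-oriented concept is a pair $(O,C)$ with $O^\square=C$ (the $\square$ on subsets of $U$) and $C^\lozenge=O$ (the $\lozenge$ on subsets of $M$); the set of these is $L_O$. A property-oriented concept is a pair $(O,C)$ with $O^\lozenge=C$ (the $\lozenge$ on subsets of $U$) and $C^\square=O$ (the $\square$ on subsets of $M$); the set of these is $L_P$. $\mathrm{Ext}$ denotes the set of extents. Standing assumption: contexts are canonical, i.e. for all $x\in U$ and $a\in M$ we have $\{x\}^\uparrow\notin\{\emptyset,M\}$ and $\{a\}^\downarrow\notin\{\emptyset,U\}$, where $\{x\}^\uparrow$ is the set of attributes of $x$ and $\{a\}^\downarrow$ is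 the set of objects having $a$. A formal decision context $\mathfrak{C}=(U,M,I,N,J)$ has conditional context $\mathfrak{C}_M=(U,M,I)$ and decision context $\mathfrak{C}_N=(U,N,J)$, with $M\cap N=\emptyset$. Subscripts $M$ and $N$ indicate the context in which an operator is computed. A II-decision rule is $(O,C)\rightarrow(Y,D)$ with $(O,C)\in L_O(\mathfrak{C}_M)$, $(Y,D)\in L_P(\mathfrak{C}_N)$ and $O\subseteq Y$; the set of these is $\mathfrak{R}_{II}(\mathfrak{C})$. Implication: $(O_1,C_1)\rightarrow(Y_1,D_1)\Rightarrow(O_2,C_2)\rightarrow(Y_2,D_2)$ iff $O_2\subseteq O_1\subseteq Y_1\subseteq Y_2$. A rule $r$ is necessary if there is no $r_1\in\mathfrak{R}_{II}(\mathfrak{C})\setminus\{r\}$ with $r_1\Rightarrow r$. $S_1$ is the equivalence relation on $\mathrm{Ext}L_O(\mathfrak{C}_M)$ given by $(O,Y)\in S_1$ iff $O^{\lozenge_N}=Y^{\lozenge_N}$. $[O]_{S_1}$ is the class of $O$, and $\cup[O]_{S_1}$ is the union of its members. *)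

theory Defs
  imports Main
begin

definition formal_context :: "'u set \<Rightarrow> 'm set \<Rightarrow> ('u \<times> 'm) set \<Rightarrow> bool" where
  "formal_context U M I \<longleftrightarrow> finite U \<and> finite M \<and> U \<noteq> {} \<and> M \<noteq> {} \<and> I \<subseteq> U \<times> M"

definition canonical :: "'u set \<Rightarrow> 'm set \<Rightarrow> ('u \<times> 'm) set \<Rightarrow> bool" where
  "canonical U M I \<longleftrightarrow>
     (\<forall>x\<in>U. {a\<in>M. (x,a)\<in>I} \<notin> {{}, M}) \<and> (\<forall>a\<in>M. {x\<in>U. (x,a)\<in>I} \<notin> {{}, U})"

definition obox :: "'u set \<Rightarrow> 'm set \<Rightarrow> ('u \<times> 'm) set \<Rightarrow> 'u set \<Rightarrow> 'm set" where
  "obox U M I X = {a\<in>M. \<forall>x\<in>U. (x,a)\<in>I \<longrightarrow> x\<in>X}"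

definition odia :: "'u set \<Rightarrow> 'm set \<Rightarrow> ('u \<times> 'm) set \<Rightarrow> 'u set \<Rightarrow> 'm set" where
  "odia U M I X = {a\<in>M. \<exists>x\<in>X. (x,a)\<in>I}"

definition abox :: "'u set \<Rightarrow> 'm set \<Rightarrow> ('u \<times> 'm) set \<Rightarrow> 'm set \<Rightarrow> 'u set" where
  "abox U M I C = {x\<in>U. \<forall>a\<in>M. (x,a)\<in>I \<longrightarrow> a\<in>C}"

definition adia :: "'u set \<Rightarrow> 'm set \<Rightarrow> ('u \<times> 'm) set \<Rightarrow> 'm set \<Rightarrow> 'u set" where
  "adia U M I C = {x\<in>U. \<exists>a\<in>C. (x,a)\<in>I}"

definition LO :: "'u set \<Rightarrow> 'm set \<Rightarrow> ('u \<times> 'm) set \<Rightarrow> ('u set \<times> 'm set) set" where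
  "LO U M I = {(X, C). X \<subseteq> U \<and> C \<subseteq> M \<and> obox U M I X = C \<and> adia U M I C = X}"

definition LP :: "'u set \<Rightarrow> 'm set \<Rightarrow> ('u \<times> 'm) set \<Rightarrow> ('u set \<times> 'm set) set" where
  "LP U M I = {(X, C). X \<subseteq> U \<and> C \<subseteq> M \<and> odia U M I X = C \<and> abox U M I C = X}"

definition ExtLO :: "'u set \<Rightarrow> 'm set \<Rightarrow> ('u \<times> 'm) set \<Rightarrow> 'u set set" where
  "ExtLO U M I = fst ` LO U M I"

text \<open>Conditional attributes have type 'm, decision attributes type 'n (so M and N are disjoint).\<close>
definition formal_decision_context ::
  "'u set \<Rightarrow> 'm set \<Rightarrow> ('u \<times> 'm) set \<Rightarrow> 'n set \<Rightarrow> ('u \<times> 'n) set \<Rightarrow> bool" where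
  "formal_decision_context U M I N J \<longleftrightarrow>
     formal_context U M I \<and> formal_context U N J \<and> canonical U M I \<and> canonical U N J"

type_synonym ('u, 'm, 'n) rule = "('u set \<times> 'm set) \<times> ('u set \<times> 'n set)"

definition rules_II ::
  "'u set \<Rightarrow> 'm set \<Rightarrow> ('u \<times> 'm) set \<Rightarrow> 'n set \<Rightarrow> ('u \<times> 'n) set \<Rightarrow> ('u, 'm, 'n) rule set" where
  "rules_II U M I N J = {((X, C), (Y, D)). (X, C) \<in> LO U M I \<and> (Y, D) \<in> LP U N J \<and> X \<subseteq> Y}"

definition rule_implies :: "('u, 'm, 'n) rule \<Rightarrow> ('u, 'm, 'n) rule \<Rightarrow> bool" where
  "rule_implies r1 r2 \<longleftrightarrow>
     fst (fst r2) \<subseteq> fst (fst r1) \<and> fst (fst r1) \<subseteq> fst (snd r1) \<and> fst (snd r1) \<subseteq> fst (snd r2)"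

definition necessary_rules_II ::
  "'u set \<Rightarrow> 'm set \<Rightarrow> ('u \<times> 'm) set \<Rightarrow> 'n set \<Rightarrow> ('u \<times> 'n) set \<Rightarrow> ('u, 'm, 'n) rule set" where
  "necessary_rules_II U M I N J =
     {r \<in> rules_II U M I N J. \<not> (\<exists>r1 \<in> rules_II U M I N J - {r}. rule_implies r1 r)}"

definition S1 ::
  "'u set \<Rightarrow> 'm set \<Rightarrow> ('u \<times> 'm) set \<Rightarrow> 'n set \<Rightarrow> ('u \<times> 'n) set \<Rightarrow> ('u set \<times> 'u set) set" where
  "S1 U M I N J = {(X, Y). X \<in> ExtLO U M I \<and> Y \<in> ExtLO U M I \<and> odia U N J X = odia U N J Y}"

end

theory Submission
  imports Defs
begin

lemma ExtLO_iff: "X \<in> ExtLO U M I \<longleftrightarrow> X \<subseteq> U \<and> adia U M I (obox U M I X) = X"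
  unfolding ExtLO_def LO_def image_def obox_def by auto

lemma LO_iff: "(X, C) \<in> LO U M I \<longleftrightarrow> X \<in> ExtLO U M I \<and> C = obox U M I X"
  unfolding ExtLO_def LO_def image_def obox_def by auto

lemma LP_iff: "(Y, D) \<in> LP U N J \<longleftrightarrow> Y \<subseteq> U \<and> D = odia U N J Y \<and> abox U N J (odia U N J Y) = Y"
  unfolding LP_def odia_def by auto

lemma galois: "X \<subseteq> U \<Longrightarrow> odia U N J X \<subseteq> D \<longleftrightarrow> X \<subseteq> abox U N J D"
  unfolding odia_def abox_def by blast

lemma odia_mono: "X \<subseteq> Y \<Longrightarrow> odia U N J X \<subseteq> odia U N J Y"
  unfolding odia_def by blast

lemma obox_mono: "X \<subseteq> Y \<Longrightarrow> obox U M I X \<subseteq> obox U M I Y"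
  unfolding obox_def by blast

lemma abox_sub: "abox U N J D \<subseteq> U" unfolding abox_def by blast

lemma union_ext:
  assumes "\<X> \<subseteq> ExtLO U M I" shows "\<Union>\<X> \<in> ExtLO U M I"
proof -
  have "\<forall>X\<in>\<X>. X \<subseteq> U"
  proof
    fix X assume "X \<in> \<X>"
    hence "X \<in> ExtLO U M I" using assms by blast
    thus "X \<subseteq> U" by (simp add: ExtLO_iff)
  qed
  hence sub: "\<Union>\<X> \<subseteq> U" by blast
  have "adia U M I (obox U M I (\<Union>\<X>)) \<subseteq> \<Union>\<X>"
    unfolding adia_def obox_def by blast
  moreover have "\<Union>\<X> \<subseteq> adia U M I (obox U M I (\<Union>\<X>))"
  proof
    fix x assume "x \<in> \<Union>\<X>"
    then obtain X where X: "X \<in> \<X>" "x \<in> X" by blast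
    then have e: "adia U M I (obox U M I X) = X" using assms by (auto simp: ExtLO_iff)
    have m: "obox U M I X \<subseteq> obox U M I (\<Union>\<X>)" using X by (intro obox_mono) blast
    from X(2) e have "x \<in> adia U M I (obox U M I X)" by simp
    with m show "x \<in> adia U M I (obox U M I (\<Union>\<X>))" unfolding adia_def by blast
  qed
  ultimately show ?thesis using sub by (auto simp: ExtLO_iff)
qed

lemma odia_abox_odia: "X \<subseteq> U \<Longrightarrow> odia U N J (abox U N J (odia U N J X)) = odia U N J X"
proof -
  assume X: "X \<subseteq> U"
  have "X \<subseteq> abox U N J (odia U N J X)" using galois[OF X, of N J "odia U N J X"] by simp
  hence "odia U N J X \<subseteq> odia U N J (abox U N J (odia U N J X))" by (rule odia_mono)
  moreover have "odia U N J (abox U N J (odia U N J X)) \<subseteq> odia U N J X"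
    using galois[OF abox_sub[of U N J "odia U N J X"], of N J "odia U N J X"] by simp
  ultimately show ?thesis by blast
qed

lemma W_props:
  fixes N :: "'n set" and J :: "('u \<times> 'n) set"
  assumes X: "X \<in> ExtLO U M I"
  defines "W \<equiv> \<Union> (S1 U M I N J `` {X})"
  shows "W \<in> ExtLO U M I" "X \<subseteq> W" "odia U N J W = odia U N J X"
    "\<And>O1. O1 \<in> ExtLO U M I \<Longrightarrow> odia U N J O1 = odia U N J X \<Longrightarrow> O1 \<subseteq> W"
proof -
  show "W \<in> ExtLO U M I" unfolding W_def by (rule union_ext) (auto simp: S1_def)
  show "X \<subseteq> W" unfolding W_def using X by (auto simp: S1_def)
  show "odia U N J W = odia U N J X"
  proof
    show "odia U N J W \<subseteq> odia U N J X"
    proof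
      fix a assume "a \<in> odia U N J W"
      then obtain x Y where "a \<in> N" "(x, a) \<in> J" "x \<in> Y" "(X, Y) \<in> S1 U M I N J"
        unfolding odia_def W_def by blast
      hence "a \<in> odia U N J Y" "odia U N J X = odia U N J Y" unfolding odia_def S1_def by auto
      thus "a \<in> odia U N J X" by simp
    qed
    have "X \<subseteq> W" unfolding W_def using X by (auto simp: S1_def)
    thus "odia U N J X \<subseteq> odia U N J W" by (rule odia_mono)
  qed
  show "\<And>O1. O1 \<in> ExtLO U M I \<Longrightarrow> odia U N J O1 = odia U N J X \<Longrightarrow> O1 \<subseteq> W"
    unfolding W_def using X by (auto simp: S1_def)
qed

theorem theorem4p3:
  fixes U :: "'u set" and M :: "'m set" and I :: "('u \<times> 'm) set"
    and N :: "'n set" and J :: "('u \<times> 'n) set"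
  assumes "formal_decision_context U M I N J"
  shows "necessary_rules_II U M I N J =
    {((\<Union> (S1 U M I N J `` {X}), obox U M I (\<Union> (S1 U M I N J `` {X}))),
      (abox U N J (odia U N J X), odia U N J X)) | X. X \<in> ExtLO U M I}"
proof -
  let ?W = "\<lambda>X. \<Union> (S1 U M I N J `` {X})"
  let ?cl = "\<lambda>X. abox U N J (odia U N J X)"
  have clLP: "(?cl X, odia U N J X) \<in> LP U N J" if "X \<subseteq> U" for X
    using that odia_abox_odia[OF that, of N J] abox_sub[of U N J] by (simp add: LP_iff)
  have clsub: "X \<subseteq> ?cl X" if "X \<subseteq> U" for X using galois[OF that, of N J "odia U N J X"] by blast
  have clmin: "?cl X \<subseteq> Y" if "(Y, D) \<in> LP U N J" "X \<subseteq> Y" for X Y D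
  proof -
    have "odia U N J X \<subseteq> odia U N J Y" using that(2) by (rule odia_mono)
    hence "?cl X \<subseteq> ?cl Y" unfolding abox_def by blast
    thus ?thesis using that(1) by (simp add: LP_iff)
  qed
  have dir1: "r \<in> {((?W X, obox U M I (?W X)), (?cl X, odia U N J X)) | X. X \<in> ExtLO U M I}"
    if r: "r \<in> necessary_rules_II U M I N J" for r
  proof -
    obtain Ob C Y D where rr: "r = ((Ob, C), (Y, D))" by (metis prod.collapse)
    have inr: "(Ob, C) \<in> LO U M I" "(Y, D) \<in> LP U N J" "Ob \<subseteq> Y"
      using r rr by (auto simp: necessary_rules_II_def rules_II_def)
    have nimp: "\<And>r1. r1 \<in> rules_II U M I N J \<Longrightarrow> rule_implies r1 r \<Longrightarrow> r1 = r"
      using r by (auto simp: necessary_rules_II_def)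
    have OE: "Ob \<in> ExtLO U M I" and C: "C = obox U M I Ob" using inr(1) by (auto simp: LO_iff)
    have OU: "Ob \<subseteq> U" using OE by (simp add: ExtLO_iff)
    have "((Ob, obox U M I Ob), (?cl Ob, odia U N J Ob)) \<in> rules_II U M I N J"
      using OE clLP[OF OU] clsub[OF OU] by (auto simp: rules_II_def LO_iff)
    moreover have "rule_implies ((Ob, obox U M I Ob), (?cl Ob, odia U N J Ob)) r"
      using rr clsub[OF OU] clmin[OF inr(2,3)] by (simp add: rule_implies_def)
    ultimately have e1: "((Ob, obox U M I Ob), (?cl Ob, odia U N J Ob)) = r" by (rule nimp)
    hence Y: "Y = ?cl Ob" and D: "D = odia U N J Ob" using rr by auto
    note Wp = W_props[OF OE, where N=N and J=J]
    have WU: "?W Ob \<subseteq> U" using Wp(1) by (simp add: ExtLO_iff)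
    have WY: "?W Ob \<subseteq> Y" unfolding Y using galois[OF WU, of N J "odia U N J Ob"] Wp(3) by simp
    have "((?W Ob, obox U M I (?W Ob)), (Y, D)) \<in> rules_II U M I N J"
      using Wp(1) inr(2) WY by (auto simp: rules_II_def LO_iff)
    moreover have "rule_implies ((?W Ob, obox U M I (?W Ob)), (Y, D)) r"
      using rr Wp(2) WY by (simp add: rule_implies_def)
    ultimately have "((?W Ob, obox U M I (?W Ob)), (Y, D)) = r" by (rule nimp)
    hence "r = ((?W Ob, obox U M I (?W Ob)), (?cl Ob, odia U N J Ob))" using Y D by simp
    thus ?thesis using OE by blast
  qed
  have dir2: "r \<in> necessary_rules_II U M I N J"
    if "r \<in> {((?W X, obox U M I (?W X)), (?cl X, odia U N J X)) | X. X \<in> ExtLO U M I}" for r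
  proof -
    from that obtain X where XE: "X \<in> ExtLO U M I"
      and rr: "r = ((?W X, obox U M I (?W X)), (?cl X, odia U N J X))" by blast
    have XU: "X \<subseteq> U" using XE by (simp add: ExtLO_iff)
    note Wp = W_props[OF XE, where N=N and J=J]
    have WU: "?W X \<subseteq> U" using Wp(1) by (simp add: ExtLO_iff)
    have WY: "?W X \<subseteq> ?cl X" using galois[OF WU, of N J "odia U N J X"] Wp(3) by simp
    have rin: "r \<in> rules_II U M I N J"
      using rr Wp(1) clLP[OF XU] WY by (auto simp: rules_II_def LO_iff)
    have "r1 = r" if r1: "r1 \<in> rules_II U M I N J" "rule_implies r1 r" for r1
    proof -
      obtain O1 C1 Y1 D1 where rr1: "r1 = ((O1, C1), (Y1, D1))" by (metis prod.collapse)
      have in1: "(O1, C1) \<in> LO U M I" "(Y1, D1) \<in> LP U N J" "O1 \<subseteq> Y1"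
        using r1 rr1 by (auto simp: rules_II_def)
      have im: "?W X \<subseteq> O1" "Y1 \<subseteq> ?cl X" using r1(2) rr rr1 by (auto simp: rule_implies_def)
      have "X \<subseteq> Y1" using Wp(2) im(1) in1(3) by blast
      hence "?cl X \<subseteq> Y1" by (rule clmin[OF in1(2)])
      hence Y1: "Y1 = ?cl X" using im(2) by blast
      have D1: "D1 = odia U N J X" using in1(2) Y1 odia_abox_odia[OF XU, of N J] by (simp add: LP_iff)
      have O1E: "O1 \<in> ExtLO U M I" and C1: "C1 = obox U M I O1" using in1(1) by (auto simp: LO_iff)
      have O1U: "O1 \<subseteq> U" using O1E by (simp add: ExtLO_iff)
      have "odia U N J O1 \<subseteq> odia U N J X" using galois[OF O1U, of N J "odia U N J X"] in1(3) Y1 by simp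
      moreover have "odia U N J X \<subseteq> odia U N J O1" using Wp(3) odia_mono[OF im(1), where U=U and N=N and J=J] by simp
      ultimately have "O1 \<subseteq> ?W X" using Wp(4)[OF O1E] by blast
      hence "O1 = ?W X" using im(1) by blast
      thus ?thesis using rr rr1 Y1 D1 C1 by simp
    qed
    thus ?thesis using rin by (auto simp: necessary_rules_II_def)
  qed
  show ?thesis
  proof (rule subset_antisym)
    show "necessary_rules_II U M I N J \<subseteq> {((?W X, obox U M I (?W X)), (?cl X, odia U N J X)) | X. X \<in> ExtLO U M I}"
      using dir1 by (rule subsetI)
    show "{((?W X, obox U M I (?W X)), (?cl X, odia U N J X)) | X. X \<in> ExtLO U M I} \<subseteq> necessary_rules_II U M I N J"
      using dir2 by (rule subsetI)
  qed
qed

end
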